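(* Let $(b,c)$ be a connected graph over a countable set $X$, $G$ a nilpotent group acting cocompactly on $X$ with $H_{b,c}$ $G$-invariant, and $x_0\in X$. Let $R$ be a normal subgroup of $G$ and $Q(R)=\pi^{-1}(Z(G/R))$ with $\pi:G\to G/R$ the projection. Then for every $q\in Q(R)$ which is a commutator in $G$ (i.e. $q=[g,l]$ for some $g,l\in G$) and every harmonic $f\in\mathcal{K}^R$ we have $T_qf=f$.
   Context: A graph over $X$ is $(b,c)$ with $b:X\times X\to[0,\infty)$, $c:X\to\mathbb{R}$, $\sum_yb(x,y)<\infty$ ($b$ need not be symmetric); connected: any two points are joined by a finite sequence $y_1,\dots,y_n$ with $b(y_i,y_{i+1})>0$. $H_{b,c}f(x)=\sum_yb(x,y)(f(x)-f(y))+c(x)f(x)$ on $\mathrm{Dom}(H)=\{f:\sum_yb(x,y)|f(y)|<\infty\ \forall x\}$; harmonic: $Hf=0$; $\mathcal{H}^+$: nonnegative nonzero harmonic functions. $T_gf(x)=f(g^{-1}x)$; cocompact: $GV=X$ for some finite $V$; $H$ is $G$-invariant if $T_g$ preserves $\mathrm{Dom}(H)$ and $HT_g=T_gH$. $\mathcal{K}$ is the closure in $C(X)$ (product topology) of $\{f\in\mathcal{H}^+:f(x_0)=1\}$ and $\mathcal{K}^R=\{f\in\mathcal{K}:T_rf=f\ \forall r\in R\}$. *)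

theory Defs
  imports "HOL-Analysis.Analysis" "HOL-Algebra.Group_Action" "HOL-Algebra.Generated_Groups"
begin

(* The vertex set X is represented by a type 'a (X = UNIV); real functions on X are 'a \<Rightarrow> real,
   carrying the product topology (instance from HOL-Analysis.Function_Topology). *)

definition graph :: "('a \<Rightarrow> 'a \<Rightarrow> real) \<Rightarrow> bool" where
  "graph b \<longleftrightarrow> (\<forall>x y. 0 \<le> b x y) \<and> (\<forall>x. b x summable_on UNIV)"

definition graph_connected :: "('a \<Rightarrow> 'a \<Rightarrow> real) \<Rightarrow> bool" where
  "graph_connected b \<longleftrightarrow> (\<forall>x y. (\<lambda>u v. b u v > 0)\<^sup>*\<^sup>* x y)"

definition dom_H :: "('a \<Rightarrow> 'a \<Rightarrow> real) \<Rightarrow> ('a \<Rightarrow> real) set" where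
  "dom_H b = {f. \<forall>x. (\<lambda>y. b x y * \<bar>f y\<bar>) summable_on UNIV}"

definition H_op :: "('a \<Rightarrow> 'a \<Rightarrow> real) \<Rightarrow> ('a \<Rightarrow> real) \<Rightarrow> ('a \<Rightarrow> real) \<Rightarrow> 'a \<Rightarrow> real" where
  "H_op b c f x = (\<Sum>\<^sub>\<infinity>y. b x y * (f x - f y)) + c x * f x"

definition harmonic :: "('a \<Rightarrow> 'a \<Rightarrow> real) \<Rightarrow> ('a \<Rightarrow> real) \<Rightarrow> ('a \<Rightarrow> real) \<Rightarrow> bool" where
  "harmonic b c f \<longleftrightarrow> f \<in> dom_H b \<and> H_op b c f = (\<lambda>_. 0)"

definition Hplus :: "('a \<Rightarrow> 'a \<Rightarrow> real) \<Rightarrow> ('a \<Rightarrow> real) \<Rightarrow> ('a \<Rightarrow> real) set" where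
  "Hplus b c = {f. harmonic b c f \<and> (\<forall>x. 0 \<le> f x) \<and> f \<noteq> (\<lambda>_. 0)}"

definition Kset :: "('a \<Rightarrow> 'a \<Rightarrow> real) \<Rightarrow> ('a \<Rightarrow> real) \<Rightarrow> 'a \<Rightarrow> ('a \<Rightarrow> real) set" where
  "Kset b c x0 = closure {f \<in> Hplus b c. f x0 = 1}"

definition Tact :: "('g, 'm) monoid_scheme \<Rightarrow> ('g \<Rightarrow> 'a \<Rightarrow> 'a) \<Rightarrow> 'g \<Rightarrow> ('a \<Rightarrow> real) \<Rightarrow> 'a \<Rightarrow> real" where
  "Tact G \<phi> g f = (\<lambda>x. f (\<phi> (inv\<^bsub>G\<^esub> g) x))"

definition KsetR :: "('g, 'm) monoid_scheme \<Rightarrow> ('g \<Rightarrow> 'a \<Rightarrow> 'a) \<Rightarrow> ('a \<Rightarrow> 'a \<Rightarrow> real) \<Rightarrow> ('a \<Rightarrow> real)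
    \<Rightarrow> 'a \<Rightarrow> 'g set \<Rightarrow> ('a \<Rightarrow> real) set" where
  "KsetR G \<phi> b c x0 R = {f \<in> Kset b c x0. \<forall>r\<in>R. Tact G \<phi> r f = f}"

definition cocompact :: "('g, 'm) monoid_scheme \<Rightarrow> ('g \<Rightarrow> 'a \<Rightarrow> 'a) \<Rightarrow> bool" where
  "cocompact G \<phi> \<longleftrightarrow> (\<exists>V. finite V \<and> (\<Union>g\<in>carrier G. \<phi> g ` V) = UNIV)"

definition H_invariant :: "('g, 'm) monoid_scheme \<Rightarrow> ('g \<Rightarrow> 'a \<Rightarrow> 'a) \<Rightarrow> ('a \<Rightarrow> 'a \<Rightarrow> real) \<Rightarrow> ('a \<Rightarrow> real) \<Rightarrow> bool" where
  "H_invariant G \<phi> b c \<longleftrightarrow> (\<forall>g\<in>carrier G. \<forall>f\<in>dom_H b.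
      Tact G \<phi> g f \<in> dom_H b \<and> H_op b c (Tact G \<phi> g f) = Tact G \<phi> g (H_op b c f))"

definition commutator :: "('g, 'm) monoid_scheme \<Rightarrow> 'g \<Rightarrow> 'g \<Rightarrow> 'g" where
  "commutator G g l = g \<otimes>\<^bsub>G\<^esub> l \<otimes>\<^bsub>G\<^esub> inv\<^bsub>G\<^esub> g \<otimes>\<^bsub>G\<^esub> inv\<^bsub>G\<^esub> l"

fun lower_central :: "('g, 'm) monoid_scheme \<Rightarrow> nat \<Rightarrow> 'g set" where
  "lower_central G 0 = carrier G"
| "lower_central G (Suc n) =
     generate G {commutator G h g | h g. h \<in> lower_central G n \<and> g \<in> carrier G}"

definition nilpotent_group :: "('g, 'm) monoid_scheme \<Rightarrow> bool" where
  "nilpotent_group G \<longleftrightarrow> group G \<and> (\<exists>n. lower_central G n = {\<one>\<^bsub>G\<^esub>})"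

definition group_center :: "('g, 'm) monoid_scheme \<Rightarrow> 'g set" where
  "group_center G = {z \<in> carrier G. \<forall>x\<in>carrier G. z \<otimes>\<^bsub>G\<^esub> x = x \<otimes>\<^bsub>G\<^esub> z}"

definition Qset :: "('g, 'm) monoid_scheme \<Rightarrow> 'g set \<Rightarrow> 'g set" where
  "Qset G R = {q \<in> carrier G. R #>\<^bsub>G\<^esub> q \<in> group_center (G Mod R)}"

end

theory Submission
  imports Defs
begin


definition Pc :: "('a \<Rightarrow> 'a \<Rightarrow> real) \<Rightarrow> ('a \<Rightarrow> real) \<Rightarrow> ('a \<Rightarrow> real) set" where
  "Pc b c = {F. harmonic b c F \<and> (\<forall>x. 0 \<le> F x)}"

lemma summ_prod:
  assumes "F \<in> dom_H b" "graph b"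
  shows "(\<lambda>y. b x y * F y) summable_on UNIV"
proof -
  have s: "(\<lambda>y. b x y * \<bar>F y\<bar>) summable_on UNIV" using assms(1) by (simp add: dom_H_def)
  have n: "norm (b x y * F y) = b x y * \<bar>F y\<bar>" for y
  proof -
    have "0 \<le> b x y" using assms(2) unfolding graph_def by blast
    then show ?thesis unfolding real_norm_def abs_mult by simp
  qed
  show ?thesis by (rule abs_summable_summable) (use s n in simp)
qed

lemma summ_diff:
  assumes "F \<in> dom_H b" "graph b"
  shows "(\<lambda>y. b x y * (F x - F y)) summable_on UNIV"
proof -
  have s1: "(\<lambda>y. b x y * F x) summable_on UNIV"
    by (rule summable_on_cmult_left) (use assms(2) in \<open>simp add: graph_def\<close>)
  have s2: "(\<lambda>y. - (b x y * F y)) summable_on UNIV"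
    using summ_prod[OF assms, of x] by (simp add: summable_on_uminus)
  have "(\<lambda>y. b x y * F x + - (b x y * F y)) summable_on UNIV"
    using summable_on_add[OF s1 s2] .
  then show ?thesis by (simp add: algebra_simps)
qed

lemma infsum_split:
  assumes "F \<in> dom_H b" "graph b"
  shows "(\<Sum>\<^sub>\<infinity>y. b x y * (F x - F y)) = (\<Sum>\<^sub>\<infinity>y. b x y) * F x - (\<Sum>\<^sub>\<infinity>y. b x y * F y)"
proof -
  have s1: "(\<lambda>y. b x y * F x) summable_on UNIV"
    by (rule summable_on_cmult_left) (use assms(2) in \<open>simp add: graph_def\<close>)
  have s2: "(\<lambda>y. - (b x y * F y)) summable_on UNIV"
    using summ_prod[OF assms, of x] by (simp add: summable_on_uminus)
  have "(\<Sum>\<^sub>\<infinity>y. b x y * (F x - F y)) = (\<Sum>\<^sub>\<infinity>y. b x y * F x + - (b x y * F y))"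
    by (simp add: algebra_simps)
  also have "\<dots> = (\<Sum>\<^sub>\<infinity>y. b x y * F x) + (\<Sum>\<^sub>\<infinity>y. - (b x y * F y))"
    by (rule infsum_add[OF s1 s2])
  also have "\<dots> = (\<Sum>\<^sub>\<infinity>y. b x y) * F x - (\<Sum>\<^sub>\<infinity>y. b x y * F y)"
    using assms(2) by (simp add: infsum_cmult_left infsum_uminus graph_def)
  finally show ?thesis .
qed

lemma harmonic_lin:
  assumes gb: "graph b" and hF: "harmonic b c F" and hF': "harmonic b c F'"
  shows "harmonic b c (\<lambda>y. a * F y - F' y)"
proof -
  have dF: "F \<in> dom_H b" and dF': "F' \<in> dom_H b" using hF hF' by (auto simp: harmonic_def)
  have dom: "(\<lambda>y. a * F y - F' y) \<in> dom_H b"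
    unfolding dom_H_def
  proof (safe)
    fix x
    have s1: "(\<lambda>y. \<bar>a\<bar> * (b x y * \<bar>F y\<bar>)) summable_on UNIV"
      by (rule summable_on_cmult_right) (use dF in \<open>simp add: dom_H_def\<close>)
    have s2: "(\<lambda>y. b x y * \<bar>F' y\<bar>) summable_on UNIV"
      using dF' by (simp add: dom_H_def)
    have s: "(\<lambda>y. \<bar>a\<bar> * (b x y * \<bar>F y\<bar>) + b x y * \<bar>F' y\<bar>) summable_on UNIV"
      by (rule summable_on_add[OF s1 s2])
    show "(\<lambda>y. b x y * \<bar>a * F y - F' y\<bar>) summable_on UNIV"
    proof (rule summable_on_comparison_test[OF s])
      fix y
      have b0: "0 \<le> b x y" using gb by (simp add: graph_def)
      have "\<bar>a * F y - F' y\<bar> \<le> \<bar>a\<bar> * \<bar>F y\<bar> + \<bar>F' y\<bar>"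
        by (metis abs_mult abs_triangle_ineq4)
      then have "b x y * \<bar>a * F y - F' y\<bar> \<le> b x y * (\<bar>a\<bar> * \<bar>F y\<bar> + \<bar>F' y\<bar>)"
        using b0 by (simp add: mult_left_mono)
      then show "b x y * \<bar>a * F y - F' y\<bar> \<le> \<bar>a\<bar> * (b x y * \<bar>F y\<bar>) + b x y * \<bar>F' y\<bar>"
        by (simp add: algebra_simps)
      show "0 \<le> b x y * \<bar>a * F y - F' y\<bar>" using b0 by simp
    qed
  qed
  have H: "H_op b c (\<lambda>y. a * F y - F' y) x = a * H_op b c F x - H_op b c F' x" for x
  proof -
    have e: "(\<lambda>y. b x y * ((a * F x - F' x) - (a * F y - F' y))) =
             (\<lambda>y. a * (b x y * (F x - F y)) + - (b x y * (F' x - F' y)))"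
      by (auto simp: algebra_simps)
    have s1: "(\<lambda>y. a * (b x y * (F x - F y))) summable_on UNIV"
      by (rule summable_on_cmult_right, rule summ_diff[OF dF gb])
    have s2: "(\<lambda>y. - (b x y * (F' x - F' y))) summable_on UNIV"
      using summ_diff[OF dF' gb] by (simp add: summable_on_uminus)
    have i1: "(\<Sum>\<^sub>\<infinity>y. a * (b x y * (F x - F y))) = a * (\<Sum>\<^sub>\<infinity>y. b x y * (F x - F y))"
      by (rule infsum_cmult_right) (use summ_diff[OF dF gb, of x] in simp)
    have i2: "(\<Sum>\<^sub>\<infinity>y. - (b x y * (F' x - F' y))) = - (\<Sum>\<^sub>\<infinity>y. b x y * (F' x - F' y))"
      by (rule infsum_uminus)
    show ?thesis
      unfolding H_op_def e infsum_add[OF s1 s2] i1 i2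
      by (simp add: algebra_simps)
  qed
  show ?thesis using hF hF' dom unfolding harmonic_def
    by (auto simp: fun_eq_iff H)
qed

definition Dc :: "('a \<Rightarrow> 'a \<Rightarrow> real) \<Rightarrow> ('a \<Rightarrow> real) \<Rightarrow> 'a \<Rightarrow> 'a \<Rightarrow> real" where
  "Dc b c x z = max 0 (((\<Sum>\<^sub>\<infinity>y. b x y) + c x) / b x z)"

lemma harnack_edge:
  assumes gb: "graph b" and F: "F \<in> Pc b c" and bz: "0 < b x z"
  shows "F z \<le> Dc b c x z * F x"
proof -
  have hF: "harmonic b c F" and nn: "\<And>y. 0 \<le> F y" using F by (auto simp: Pc_def)
  have dF: "F \<in> dom_H b" using hF by (simp add: harmonic_def)
  have "H_op b c F x = 0" using hF by (simp add: harmonic_def)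
  then have eq: "(\<Sum>\<^sub>\<infinity>y. b x y * F y) = ((\<Sum>\<^sub>\<infinity>y. b x y) + c x) * F x"
    unfolding H_op_def infsum_split[OF dF gb] by (simp add: algebra_simps)
  have "(\<Sum>\<^sub>\<infinity>y\<in>{z}. b x y * F y) \<le> (\<Sum>\<^sub>\<infinity>y. b x y * F y)"
    by (rule infsum_mono_neutral) (use summ_prod[OF dF gb] gb nn in \<open>auto simp: graph_def\<close>)
  then have "b x z * F z \<le> ((\<Sum>\<^sub>\<infinity>y. b x y) + c x) * F x" using eq by simp
  then have "F z \<le> ((\<Sum>\<^sub>\<infinity>y. b x y) + c x) * F x / b x z" using bz
    by (simp add: field_simps)
  also have "\<dots> = (((\<Sum>\<^sub>\<infinity>y. b x y) + c x) / b x z) * F x" by simp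
  also have "\<dots> \<le> Dc b c x z * F x" unfolding Dc_def
    by (rule mult_right_mono) (auto simp: nn)
  finally show ?thesis .
qed

lemma harnack:
  assumes gb: "graph b" and conn: "graph_connected b"
  shows "\<exists>C\<ge>0. \<forall>F\<in>Pc b c. F y \<le> C * F x"
proof -
  have "(\<lambda>u v. b u v > 0)\<^sup>*\<^sup>* x y" using conn by (simp add: graph_connected_def)
  then show ?thesis
  proof (induction rule: rtranclp_induct)
    case base
    then show ?case by (intro exI[of _ 1]) simp
  next
    case (step y z)
    then obtain C where C: "C \<ge> 0" "\<forall>F\<in>Pc b c. F y \<le> C * F x" by blast
    show ?case
    proof (intro exI[of _ "Dc b c y z * C"] conjI ballI)
      show "0 \<le> Dc b c y z * C" using C by (simp add: Dc_def)
      fix F assume F: "F \<in> Pc b c"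
      have "F z \<le> Dc b c y z * F y" using harnack_edge[OF gb F] step by simp
      also have "\<dots> \<le> Dc b c y z * (C * F x)"
        by (rule mult_left_mono) (use C F in \<open>auto simp: Dc_def Pc_def\<close>)
      finally show "F z \<le> Dc b c y z * C * F x" by (simp add: mult.assoc)
    qed
  qed
qed

lemma finite_const:
  assumes "finite S" "\<And>s. s \<in> S \<Longrightarrow> \<exists>C. Q s C" "\<And>s C C'. Q s C \<Longrightarrow> C \<le> C' \<Longrightarrow> Q s C'"
  shows "\<exists>C\<ge>(1::real). \<forall>s\<in>S. Q s C"
  using assms
proof (induction S rule: finite_induct)
  case empty
  then show ?case by auto
next
  case (insert x S)
  then obtain C where C: "C \<ge> 1" "\<forall>s\<in>S. Q s C" by blast
  obtain D where D: "Q x D" using insert by blast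
  show ?case
    by (rule exI[of _ "max C D"]) (use C D insert.prems(2) in \<open>auto\<close>)
qed

lemma harnack_finite:
  assumes gb: "graph b" and conn: "graph_connected b" and S: "finite S"
  shows "\<exists>C\<ge>1. \<forall>p\<in>S. \<forall>F\<in>Pc b c. F (snd p) \<le> C * F (fst p)"
proof (rule finite_const[OF S])
  fix p :: "'a \<times> 'a"
  obtain C where "C \<ge> 0" "\<forall>F\<in>Pc b c. F (snd p) \<le> C * F (fst p)"
    using harnack[OF gb conn, where x="fst p" and y="snd p" and c=c] by (elim exE conjE)
  then show "\<exists>C. \<forall>F\<in>Pc b c. F (snd p) \<le> C * F (fst p)" by blast
next
  fix p and C C' :: real
  assume h: "\<forall>F\<in>Pc b c. F (snd p) \<le> C * F (fst p)" "C \<le> C'"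
  show "\<forall>F\<in>Pc b c. F (snd p) \<le> C' * F (fst p)"
  proof
    fix F assume F: "F \<in> Pc b c"
    have "F (snd p) \<le> C * F (fst p)" using h F by blast
    also have "\<dots> \<le> C' * F (fst p)"
      by (rule mult_right_mono) (use h F in \<open>auto simp: Pc_def\<close>)
    finally show "F (snd p) \<le> C' * F (fst p)" .
  qed
qed




lemma (in group) central_pow:
  assumes c: "c \<in> carrier G" and cen: "\<forall>x\<in>carrier G. c \<otimes> x = x \<otimes> c" and x: "x \<in> carrier G"
  shows "c [^] (k::nat) \<otimes> x = x \<otimes> c [^] k"
proof (induction k)
  case 0 then show ?case using x by simp
next
  case (Suc k)
  have "c [^] Suc k \<otimes> x = c [^] k \<otimes> (c \<otimes> x)" using c x by (simp add: m_assoc)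
  also have "\<dots> = c [^] k \<otimes> (x \<otimes> c)" using cen x by simp
  also have "\<dots> = (c [^] k \<otimes> x) \<otimes> c" using c x by (simp add: m_assoc)
  also have "\<dots> = x \<otimes> c [^] Suc k" using Suc c x by (simp add: m_assoc)
  finally show ?case .
qed

lemma (in group) comm_pow:
  assumes a: "a \<in> carrier G" and b: "b \<in> carrier G"
    and c: "c = a \<otimes> b \<otimes> inv a \<otimes> inv b" and cen: "\<forall>x\<in>carrier G. c \<otimes> x = x \<otimes> c"
  shows "a [^] n \<otimes> b [^] n \<otimes> inv (a [^] n) \<otimes> inv (b [^] n) = c [^] (n * n :: nat)"
proof -
  have cc: "c \<in> carrier G" using a b c by simp
  have t: "inv b \<otimes> (b \<otimes> a) = a" using a b by (simp add: m_assoc[symmetric])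
  have s0: "a \<otimes> b = c \<otimes> (b \<otimes> a)"
    using a b c t by (simp add: m_assoc)
  have s1: "a \<otimes> b [^] m = c [^] m \<otimes> (b [^] m \<otimes> a)" for m :: nat
  proof (induction m)
    case 0 then show ?case using a by simp
  next
    case (Suc m)
    have "a \<otimes> b [^] Suc m = (a \<otimes> b [^] m) \<otimes> b" using a b by (simp add: m_assoc)
    also have "\<dots> = c [^] m \<otimes> b [^] m \<otimes> (a \<otimes> b)" using Suc a b cc by (simp add: m_assoc)
    also have "\<dots> = c [^] m \<otimes> b [^] m \<otimes> (c \<otimes> (b \<otimes> a))" using s0 by simp
    also have "\<dots> = c [^] m \<otimes> (b [^] m \<otimes> c) \<otimes> (b \<otimes> a)" using a b cc by (simp add: m_assoc)
    also have "\<dots> = c [^] m \<otimes> (c \<otimes> b [^] m) \<otimes> (b \<otimes> a)" using cen b by simp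
    also have "\<dots> = c [^] Suc m \<otimes> (b [^] Suc m \<otimes> a)" using a b cc by (simp add: m_assoc)
    finally show ?case .
  qed
  have s2: "a [^] k \<otimes> b [^] m = c [^] (k * m) \<otimes> (b [^] m \<otimes> a [^] k)" for k m :: nat
  proof (induction k)
    case 0 then show ?case using b by simp
  next
    case (Suc k)
    have "a [^] Suc k \<otimes> b [^] m = a [^] k \<otimes> (a \<otimes> b [^] m)" using a b by (simp add: m_assoc)
    also have "\<dots> = a [^] k \<otimes> c [^] m \<otimes> (b [^] m \<otimes> a)" using s1 a b cc by (simp add: m_assoc)
    also have "\<dots> = c [^] m \<otimes> a [^] k \<otimes> (b [^] m \<otimes> a)"
      using central_pow[OF cc cen, of "a [^] k" m] a by simp
    also have "\<dots> = c [^] m \<otimes> (a [^] k \<otimes> b [^] m) \<otimes> a" using a b cc by (simp add: m_assoc)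
    also have "\<dots> = c [^] m \<otimes> (c [^] (k * m) \<otimes> (b [^] m \<otimes> a [^] k)) \<otimes> a" using Suc by simp
    also have "\<dots> = (c [^] m \<otimes> c [^] (k * m)) \<otimes> (b [^] m \<otimes> (a [^] k \<otimes> a))" using a b cc by (simp add: m_assoc)
    also have "\<dots> = c [^] (Suc k * m) \<otimes> (b [^] m \<otimes> a [^] Suc k)"
      using cc a by (simp add: nat_pow_mult add.commute)
    finally show ?case .
  qed
  have "a [^] n \<otimes> b [^] n \<otimes> inv (a [^] n) \<otimes> inv (b [^] n)
      = c [^] (n * n) \<otimes> (b [^] n \<otimes> a [^] n) \<otimes> inv (a [^] n) \<otimes> inv (b [^] n)" using s2 by simp
  also have "\<dots> = c [^] (n * n)" using a b cc by (simp add: m_assoc)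
  finally show ?thesis .
qed




lemma (in group) central_inv:
  assumes z: "z \<in> carrier G" and cen: "\<forall>x\<in>carrier G. z \<otimes> x = x \<otimes> z" and x: "x \<in> carrier G"
  shows "inv z \<otimes> x = x \<otimes> inv z"
proof -
  have "inv z \<otimes> x = inv z \<otimes> (x \<otimes> z) \<otimes> inv z" using z x by (simp add: m_assoc)
  also have "\<dots> = inv z \<otimes> (z \<otimes> x) \<otimes> inv z" using cen x by simp
  also have "\<dots> = x \<otimes> inv z" using z x by (simp add: m_assoc[symmetric])
  finally show ?thesis .
qed

locale lsetup =
  fixes G :: "('g, 'm) monoid_scheme" (structure) and \<phi> :: "'g \<Rightarrow> 'a \<Rightarrow> 'a"
    and b :: "'a \<Rightarrow> 'a \<Rightarrow> real" and c :: "'a \<Rightarrow> real" and R :: "'g set"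
  assumes grp: "group G" and act: "group_action G UNIV \<phi>" and gb: "graph b"
    and conn: "graph_connected b" and Hinv: "H_invariant G \<phi> b c" and nR: "R \<lhd> G"
begin

sublocale group G by (rule grp)

lemma N: "normal R G" by (rule nR)

lemma comp: "u \<in> carrier G \<Longrightarrow> v \<in> carrier G \<Longrightarrow> \<phi> (u \<otimes> v) y = \<phi> u (\<phi> v y)"
  using group_action.composition_rule[OF act] by simp

lemma one_act: "\<phi> \<one> y = y"
  using group_action.id_eq_one[OF act] by (metis UNIV_I restrict_apply')

lemma translate:
  assumes F: "F \<in> Pc b c" and u: "u \<in> carrier G"
  shows "(\<lambda>y. F (\<phi> u y)) \<in> Pc b c"
proof -
  have hF: "harmonic b c F" and nn: "\<And>x. 0 \<le> F x" using F by (auto simp: Pc_def)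
  have iu: "inv u \<in> carrier G" using u by simp
  have T: "Tact G \<phi> (inv u) F = (\<lambda>y. F (\<phi> u y))" using u by (simp add: Tact_def)
  have "Tact G \<phi> (inv u) F \<in> dom_H b \<and> H_op b c (Tact G \<phi> (inv u) F) = Tact G \<phi> (inv u) (H_op b c F)"
    using Hinv iu hF by (auto simp: H_invariant_def harmonic_def)
  moreover have "H_op b c F = (\<lambda>_. 0)" using hF by (simp add: harmonic_def)
  ultimately have "harmonic b c (Tact G \<phi> (inv u) F)"
    by (simp add: harmonic_def Tact_def)
  then show ?thesis using nn T by (simp add: Pc_def)
qed

definition Rinv :: "('a \<Rightarrow> real) \<Rightarrow> bool" where
  "Rinv F \<longleftrightarrow> (\<forall>r\<in>R. \<forall>y. F (\<phi> r y) = F y)"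

definition cm :: "'g \<Rightarrow> bool" where
  "cm t \<longleftrightarrow> t \<in> carrier G \<and> (\<forall>u\<in>carrier G. \<exists>r\<in>R. t \<otimes> u = r \<otimes> (u \<otimes> t))"

lemma mem_rcos:
  assumes "x \<in> carrier G" "y \<in> carrier G" "R #> x = R #> y"
  shows "\<exists>r\<in>R. x = r \<otimes> y"
proof -
  have "x \<in> R #> x" using assms(1) N by (simp add: rcos_self normal_imp_subgroup)
  then show ?thesis using assms(3) by (auto simp: r_coset_def)
qed

lemma Rsub: "R \<subseteq> carrier G"
  using N normal_imp_subgroup subgroup.subset by blast

lemma cm_of_Q:
  assumes "t \<in> Qset G R"
  shows "cm t"
proof -
  interpret NN: normal R G by (rule N)
  have t: "t \<in> carrier G" and cen: "R #> t \<in> group_center (G Mod R)"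
    using assms by (auto simp: Qset_def)
  show ?thesis unfolding cm_def
  proof (intro conjI ballI t)
    fix u assume u: "u \<in> carrier G"
    have "R #> u \<in> carrier (G Mod R)" using u by (simp add: FactGroup_def rcosetsI Rsub)
    then have "(R #> t) <#> (R #> u) = (R #> u) <#> (R #> t)"
      using cen by (simp add: group_center_def)
    then have "R #> (t \<otimes> u) = R #> (u \<otimes> t)" using t u by (simp add: NN.rcos_sum)
    then show "\<exists>r\<in>R. t \<otimes> u = r \<otimes> (u \<otimes> t)" using t u mem_rcos by simp
  qed
qed

lemma swap:
  assumes "Rinv f" "cm t" "u \<in> carrier G"
  shows "f (\<phi> t (\<phi> u y)) = f (\<phi> u (\<phi> t y))"
proof -
  obtain r where r: "r \<in> R" "t \<otimes> u = r \<otimes> (u \<otimes> t)" using assms(2,3) by (auto simp: cm_def)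
  have t: "t \<in> carrier G" using assms(2) by (simp add: cm_def)
  have rG: "r \<in> carrier G" using r Rsub by auto
  have "f (\<phi> t (\<phi> u y)) = f (\<phi> (t \<otimes> u) y)" using t assms(3) by (simp add: comp)
  also have "\<dots> = f (\<phi> r (\<phi> (u \<otimes> t) y))" using r rG t assms(3) by (simp add: comp)
  also have "\<dots> = f (\<phi> (u \<otimes> t) y)" using assms(1) r by (simp add: Rinv_def)
  also have "\<dots> = f (\<phi> u (\<phi> t y))" using t assms(3) by (simp add: comp)
  finally show ?thesis .
qed

lemma Rinv_translate:
  assumes "Rinv f" "u \<in> carrier G"
  shows "Rinv (\<lambda>y. f (\<phi> u y))"
  unfolding Rinv_def
proof (intro ballI allI)
  interpret NN: normal R G by (rule N)
  fix r y assume r: "r \<in> R"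
  have rG: "r \<in> carrier G" using r Rsub by auto
  define r' where "r' = u \<otimes> r \<otimes> inv u"
  have r': "r' \<in> R" using NN.inv_op_closed2 assms(2) r by (simp add: r'_def)
  have r'G: "r' \<in> carrier G" using r' Rsub by auto
  have e: "u \<otimes> r = r' \<otimes> u" using assms(2) rG by (simp add: r'_def m_assoc)
  have "f (\<phi> u (\<phi> r y)) = f (\<phi> (u \<otimes> r) y)" using assms(2) rG by (simp add: comp)
  also have "\<dots> = f (\<phi> r' (\<phi> u y))" using e assms(2) r'G by (simp add: comp)
  also have "\<dots> = f (\<phi> u y)" using assms(1) r' by (simp add: Rinv_def)
  finally show "f (\<phi> u (\<phi> r y)) = f (\<phi> u y)" .
qed

lemma comm_identity:
  assumes tQ: "t \<in> Qset G R" and g: "g \<in> carrier G" and l: "l \<in> carrier G"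
    and tc: "t = commutator G g l"
  shows "\<exists>r\<in>R. g [^] (n::nat) \<otimes> l [^] n \<otimes> inv (g [^] n) \<otimes> inv (l [^] n) = r \<otimes> t [^] (n * n)"
proof -
  interpret NN: normal R G by (rule N)
  interpret h: group_hom G "G Mod R" "\<lambda>a. R #> a"
    by (simp add: group_hom_def group_hom_axioms_def grp NN.factorgroup_is_group NN.r_coset_hom_Mod)
  interpret Q: group "G Mod R" by (rule NN.factorgroup_is_group)
  have t: "t \<in> carrier G" and cen: "R #> t \<in> group_center (G Mod R)"
    using tQ by (auto simp: Qset_def)
  have ct: "R #> t = (R #> g) \<otimes>\<^bsub>G Mod R\<^esub> (R #> l) \<otimes>\<^bsub>G Mod R\<^esub> inv\<^bsub>G Mod R\<^esub> (R #> g)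
      \<otimes>\<^bsub>G Mod R\<^esub> inv\<^bsub>G Mod R\<^esub> (R #> l)"
    using g l tc by (simp add: commutator_def del: mult_FactGroup)
  have cen': "\<forall>x\<in>carrier (G Mod R). (R #> t) \<otimes>\<^bsub>G Mod R\<^esub> x = x \<otimes>\<^bsub>G Mod R\<^esub> (R #> t)"
    using cen by (simp add: group_center_def del: mult_FactGroup)
  have "(R #> g) [^]\<^bsub>G Mod R\<^esub> n \<otimes>\<^bsub>G Mod R\<^esub> (R #> l) [^]\<^bsub>G Mod R\<^esub> n
        \<otimes>\<^bsub>G Mod R\<^esub> inv\<^bsub>G Mod R\<^esub> ((R #> g) [^]\<^bsub>G Mod R\<^esub> n)
        \<otimes>\<^bsub>G Mod R\<^esub> inv\<^bsub>G Mod R\<^esub> ((R #> l) [^]\<^bsub>G Mod R\<^esub> n)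
      = (R #> t) [^]\<^bsub>G Mod R\<^esub> (n * n)"
    by (rule group.comm_pow[OF NN.factorgroup_is_group _ _ ct cen']) (use g l in simp_all)
  then have "R #> (g [^] n \<otimes> l [^] n \<otimes> inv (g [^] n) \<otimes> inv (l [^] n)) = R #> (t [^] (n * n))"
    using g l t by (simp add: h.hom_nat_pow del: mult_FactGroup)
  then show ?thesis using g l t mem_rcos by simp
qed

end




context lsetup begin

lemma step_const:
  assumes V: "finite V" and a: "a \<in> carrier G"
  shows "\<exists>K\<ge>1. \<forall>n. \<forall>v\<in>V. \<forall>F\<in>Pc b c. \<forall>u\<in>carrier G.
           F (\<phi> (u \<otimes> a [^] (n::nat)) v) \<le> K ^ n * F (\<phi> u v)"
proof -
  obtain K where K: "K \<ge> 1" "\<forall>p\<in>(\<lambda>v. (v, \<phi> a v)) ` V. \<forall>F\<in>Pc b c. F (snd p) \<le> K * F (fst p)"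
    using harnack_finite[OF gb conn, of "(\<lambda>v. (v, \<phi> a v)) ` V" c] V by blast
  have K1: "\<forall>v\<in>V. \<forall>F\<in>Pc b c. F (\<phi> a v) \<le> K * F v" using K(2) by auto
  show ?thesis
  proof (intro exI[of _ K] conjI allI ballI)
    show "1 \<le> K" by fact
    fix n :: nat and v F u assume v: "v \<in> V" and F: "F \<in> Pc b c" and u: "u \<in> carrier G"
    show "F (\<phi> (u \<otimes> a [^] n) v) \<le> K ^ n * F (\<phi> u v)"
    proof (induction n)
      case 0 then show ?case using u by simp
    next
      case (Suc n)
      have un: "u \<otimes> a [^] n \<in> carrier G" using u a by simp
      have "F (\<phi> (u \<otimes> a [^] Suc n) v) = F (\<phi> (u \<otimes> a [^] n) (\<phi> a v))"
        using u a un by (simp add: comp[symmetric] m_assoc)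
      also have "\<dots> \<le> K * F (\<phi> (u \<otimes> a [^] n) v)"
        using K1 v translate[OF F un] by auto
      also have "\<dots> \<le> K * (K ^ n * F (\<phi> u v))"
        by (rule mult_left_mono) (use Suc K(1) in auto)
      finally show ?case by (simp add: mult.assoc)
    qed
  qed
qed

lemma word_const:
  assumes V: "finite V" and g: "g \<in> carrier G" and l: "l \<in> carrier G"
  shows "\<exists>K\<ge>1. \<forall>n. \<forall>v\<in>V. \<forall>F\<in>Pc b c.
           F (\<phi> (g [^] n \<otimes> l [^] n \<otimes> inv (g [^] n) \<otimes> inv (l [^] (n::nat))) v) \<le> K ^ n * F v"
proof -
  obtain K1 where K1: "K1 \<ge> 1" "\<forall>n. \<forall>v\<in>V. \<forall>F\<in>Pc b c. \<forall>u\<in>carrier G.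
           F (\<phi> (u \<otimes> g [^] (n::nat)) v) \<le> K1 ^ n * F (\<phi> u v)" using step_const[OF V g] by blast
  obtain K2 where K2: "K2 \<ge> 1" "\<forall>n. \<forall>v\<in>V. \<forall>F\<in>Pc b c. \<forall>u\<in>carrier G.
           F (\<phi> (u \<otimes> l [^] (n::nat)) v) \<le> K2 ^ n * F (\<phi> u v)" using step_const[OF V l] by blast
  obtain K3 where K3: "K3 \<ge> 1" "\<forall>n. \<forall>v\<in>V. \<forall>F\<in>Pc b c. \<forall>u\<in>carrier G.
           F (\<phi> (u \<otimes> inv g [^] (n::nat)) v) \<le> K3 ^ n * F (\<phi> u v)" using step_const[OF V, of "inv g"] g by auto
  obtain K4 where K4: "K4 \<ge> 1" "\<forall>n. \<forall>v\<in>V. \<forall>F\<in>Pc b c. \<forall>u\<in>carrier G.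
           F (\<phi> (u \<otimes> inv l [^] (n::nat)) v) \<le> K4 ^ n * F (\<phi> u v)" using step_const[OF V, of "inv l"] l by auto
  show ?thesis
  proof (intro exI[of _ "K1 * K2 * K3 * K4"] conjI allI ballI)
    show "1 \<le> K1 * K2 * K3 * K4" using K1 K2 K3 K4
      by (metis mult_1 mult_mono' zero_le_one order_trans)
    fix n :: nat and v F assume v: "v \<in> V" and F: "F \<in> Pc b c"
    have nn: "\<And>x. 0 \<le> F x" using F by (simp add: Pc_def)
    have p1: "\<And>x. 0 \<le> K1 ^ n" "0 \<le> K2 ^ n" "0 \<le> K3 ^ n" "0 \<le> K4 ^ n" using K1 K2 K3 K4 by auto
    define A where "A = g [^] n"
    define B where "B = g [^] n \<otimes> l [^] n"
    define C where "C = g [^] n \<otimes> l [^] n \<otimes> inv g [^] n"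
    have AG: "A \<in> carrier G" "B \<in> carrier G" "C \<in> carrier G" using g l by (auto simp: A_def B_def C_def)
    have e: "g [^] n \<otimes> l [^] n \<otimes> inv (g [^] n) \<otimes> inv (l [^] n) = C \<otimes> inv l [^] n"
      using g l by (simp add: C_def nat_pow_inv)
    have "F (\<phi> (C \<otimes> inv l [^] n) v) \<le> K4 ^ n * F (\<phi> C v)" using K4 v F AG by blast
    also have "F (\<phi> C v) \<le> K3 ^ n * F (\<phi> B v)" using K3(2) v F AG(2) by (simp add: C_def B_def)
    also have "F (\<phi> B v) \<le> K2 ^ n * F (\<phi> A v)" using K2(2) v F AG(1) by (simp add: A_def B_def)
    also have "F (\<phi> A v) \<le> K1 ^ n * F (\<phi> \<one> v)" using K1(2) v F g by (metis A_def one_closed l_one nat_pow_closed)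
    finally have "F (\<phi> (C \<otimes> inv l [^] n) v) \<le> K4 ^ n * (K3 ^ n * (K2 ^ n * (K1 ^ n * F v)))"
      using p1 by (simp add: one_act mult_left_mono)
    then show "F (\<phi> (g [^] n \<otimes> l [^] n \<otimes> inv (g [^] n) \<otimes> inv (l [^] n)) v) \<le> (K1 * K2 * K3 * K4) ^ n * F v"
      unfolding e by (simp add: power_mult_distrib mult_ac)
  qed
qed

end



context lsetup begin

lemma main_claim:
  assumes coc: "cocompact G \<phi>" and f: "f \<in> Pc b c" and fpos: "\<And>x. 0 < f x" and fR: "Rinv f"
    and tQ: "t \<in> Qset G R" and g: "g \<in> carrier G" and l: "l \<in> carrier G"
    and tc: "t = commutator G g l"
  shows "f (\<phi> t x) \<le> f x"
proof (rule ccontr)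
  assume contra: "\<not> f (\<phi> t x) \<le> f x"
  obtain V where V: "finite V" "(\<Union>u\<in>carrier G. \<phi> u ` V) = UNIV"
    using coc by (auto simp: cocompact_def)
  have cover: "\<exists>u\<in>carrier G. \<exists>v\<in>V. y = \<phi> u v" for y
    using V(2) by blast
  have cmt: "cm t" using cm_of_Q[OF tQ] .
  have tG: "t \<in> carrier G" using cmt by (simp add: cm_def)
  have sw: "\<And>u y. u \<in> carrier G \<Longrightarrow> f (\<phi> t (\<phi> u y)) = f (\<phi> u (\<phi> t y))"
    using swap[OF fR cmt] by blast
  obtain C1 where C1: "C1 \<ge> 1" "\<forall>p\<in>(\<lambda>v. (v, \<phi> t v)) ` V. \<forall>F\<in>Pc b c. F (snd p) \<le> C1 * F (fst p)"
    using harnack_finite[OF gb conn, of "(\<lambda>v. (v, \<phi> t v)) ` V" c] V by blast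
  define \<rho> where "\<rho> y = f (\<phi> t y) / f y" for y
  have \<rho>b: "\<rho> y \<le> C1" for y
  proof -
    obtain u v where u: "u \<in> carrier G" and v: "v \<in> V" and y: "y = \<phi> u v" using cover by blast
    have "f (\<phi> t y) = f (\<phi> u (\<phi> t v))" using sw u y by simp
    also have "\<dots> \<le> C1 * f (\<phi> u v)" using C1(2) v translate[OF f u] by auto
    finally show ?thesis using fpos[of y] y by (simp add: \<rho>_def divide_le_eq)
  qed
  have bdd: "bdd_above (range \<rho>)" by (rule bdd_aboveI[of _ C1]) (use \<rho>b in auto)
  define \<beta> where "\<beta> = (SUP y. \<rho> y)"
  have le\<beta>: "\<rho> y \<le> \<beta>" for y unfolding \<beta>_def by (rule cSUP_upper[OF _ bdd]) simp
  have "\<rho> x > 1" using contra fpos[of x] by (simp add: \<rho>_def)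
  then have \<beta>1: "\<beta> > 1" using le\<beta>[of x] by simp
  have ft: "f (\<phi> t y) \<le> \<beta> * f y" for y using le\<beta>[of y] fpos[of y] by (simp add: \<rho>_def divide_le_eq mult.commute)
  define \<gamma> where "\<gamma> = (1 + \<beta>) / 2"
  have \<gamma>: "1 < \<gamma>" "\<gamma> < \<beta>" using \<beta>1 by (auto simp: \<gamma>_def)
  obtain Kw where Kw: "Kw \<ge> 1" "\<forall>n. \<forall>v\<in>V. \<forall>F\<in>Pc b c.
           F (\<phi> (g [^] n \<otimes> l [^] n \<otimes> inv (g [^] n) \<otimes> inv (l [^] (n::nat))) v) \<le> Kw ^ n * F v"
    using word_const[OF V(1) g l] by blast
  obtain n :: nat where n: "Kw < \<gamma> ^ n" using real_arch_pow[OF \<gamma>(1)] by blast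
  have npos: "n > 0" using n Kw(1) by (cases n) auto
  define m where "m = n * n"
  define S where "S = (\<lambda>(v, j). (v, \<phi> (t [^] (j::nat)) v)) ` (V \<times> {..<m}) \<union>
                      (\<lambda>(v, j). (\<phi> (t [^] (j::nat)) v, v)) ` (V \<times> {..<m})"
  have Sfin: "finite S" using V(1) by (simp add: S_def)
  obtain M where M: "M \<ge> 1" "\<forall>p\<in>S. \<forall>F\<in>Pc b c. F (snd p) \<le> M * F (fst p)"
    using harnack_finite[OF gb conn Sfin, of c] by blast
  have M1: "\<And>v j F. v \<in> V \<Longrightarrow> j < m \<Longrightarrow> F \<in> Pc b c \<Longrightarrow> F (\<phi> (t [^] j) v) \<le> M * F v"
    using M(2) unfolding S_def by force
  have M2: "\<And>v j F. v \<in> V \<Longrightarrow> j < m \<Longrightarrow> F \<in> Pc b c \<Longrightarrow> F v \<le> M * F (\<phi> (t [^] j) v)"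
    using M(2) unfolding S_def by force
  define \<epsilon> where "\<epsilon> = (\<beta> - \<gamma>) / (M * M)"
  have \<epsilon>: "\<epsilon> > 0" using \<gamma> M(1) by (simp add: \<epsilon>_def)
  have "\<beta> - \<epsilon> < (SUP y. \<rho> y)" using \<epsilon> by (simp add: \<beta>_def)
  then obtain x1 where x1: "\<beta> - \<epsilon> < \<rho> x1" using less_cSUP_iff[OF _ bdd] by auto
  obtain u v where u: "u \<in> carrier G" and v: "v \<in> V" and x1e: "x1 = \<phi> u v" using cover by blast
  define h where "h y = \<beta> * f y - f (\<phi> t y)" for y
  have ftP: "(\<lambda>y. f (\<phi> t y)) \<in> Pc b c" using translate[OF f tG] .
  have hP: "h \<in> Pc b c"
  proof -
    have "harmonic b c (\<lambda>y. \<beta> * f y - f (\<phi> t y))"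
      using harmonic_lin[OF gb, of c f "\<lambda>y. f (\<phi> t y)" \<beta>] f ftP by (simp add: Pc_def)
    then show ?thesis using ft by (simp add: Pc_def h_def[abs_def])
  qed
  define fu where "fu y = f (\<phi> u y)" for y
  define hu where "hu y = h (\<phi> u y)" for y
  have fuP: "fu \<in> Pc b c" using translate[OF f u] by (simp add: fu_def[abs_def])
  have huP: "hu \<in> Pc b c" using translate[OF hP u] by (simp add: hu_def[abs_def])
  have fupos: "fu y > 0" for y using fpos by (simp add: fu_def)
  have hx1: "h x1 < \<epsilon> * f x1"
    using x1 fpos[of x1] by (simp add: h_def \<rho>_def field_simps)
  have stepj: "fu (\<phi> (t [^] Suc j) v) > \<gamma> * fu (\<phi> (t [^] j) v)" if j: "j < m" for j
  proof -
    have tj: "t [^] j \<in> carrier G" using tG by simp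
    have "hu (\<phi> (t [^] j) v) \<le> M * hu v" using M1[OF v j huP] .
    also have "\<dots> = M * h x1" by (simp add: hu_def x1e)
    also have "\<dots> < M * (\<epsilon> * f x1)" using hx1 M(1) by simp
    also have "\<dots> = (\<beta> - \<gamma>) / M * fu v" using M(1) by (simp add: \<epsilon>_def fu_def x1e field_simps)
    also have "\<dots> \<le> (\<beta> - \<gamma>) / M * (M * fu (\<phi> (t [^] j) v))"
      by (rule mult_left_mono) (use M2[OF v j fuP] \<gamma> M(1) in auto)
    also have "\<dots> = (\<beta> - \<gamma>) * fu (\<phi> (t [^] j) v)" using M(1) by simp
    finally have lt: "hu (\<phi> (t [^] j) v) < (\<beta> - \<gamma>) * fu (\<phi> (t [^] j) v)" .
    have "hu (\<phi> (t [^] j) v) = \<beta> * fu (\<phi> (t [^] j) v) - f (\<phi> t (\<phi> u (\<phi> (t [^] j) v)))"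
      by (simp add: hu_def h_def fu_def)
    also have "f (\<phi> t (\<phi> u (\<phi> (t [^] j) v))) = fu (\<phi> t (\<phi> (t [^] j) v))"
      using sw[OF u] by (simp add: fu_def)
    also have "\<phi> t (\<phi> (t [^] j) v) = \<phi> (t [^] Suc j) v"
    proof -
      have "t \<otimes> t [^] j = t [^] Suc j" using nat_pow_Suc2[OF tG, of j] by simp
      then show ?thesis using comp[OF tG tj, of v] by simp
    qed
    finally show ?thesis using lt by (simp add: algebra_simps)
  qed
  have grow: "j \<le> m \<Longrightarrow> fu (\<phi> (t [^] j) v) \<ge> \<gamma> ^ j * fu v" for j
  proof (induction j)
    case 0 then show ?case by (simp add: one_act)
  next
    case (Suc j)
    then have "\<gamma> ^ j * fu v \<le> fu (\<phi> (t [^] j) v)" by simp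
    then have "\<gamma> * (\<gamma> ^ j * fu v) \<le> \<gamma> * fu (\<phi> (t [^] j) v)" using \<gamma> by simp
    also have "\<dots> < fu (\<phi> (t [^] Suc j) v)" using stepj Suc by simp
    finally show ?case by (simp add: mult.assoc)
  qed
  obtain r where r: "r \<in> R" "g [^] n \<otimes> l [^] n \<otimes> inv (g [^] n) \<otimes> inv (l [^] n) = r \<otimes> t [^] m"
    using comm_identity[OF tQ g l tc, of n] by (auto simp: m_def)
  have rG: "r \<in> carrier G" using r Rsub by auto
  have fuR: "Rinv fu" using Rinv_translate[OF fR u] by (simp add: fu_def[abs_def])
  have "fu (\<phi> (t [^] m) v) = fu (\<phi> r (\<phi> (t [^] m) v))" using fuR r by (simp add: Rinv_def)
  also have "\<dots> = fu (\<phi> (g [^] n \<otimes> l [^] n \<otimes> inv (g [^] n) \<otimes> inv (l [^] n)) v)"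
    using r rG tG by (simp add: comp)
  also have "\<dots> \<le> Kw ^ n * fu v" using Kw(2) v fuP by blast
  finally have up: "fu (\<phi> (t [^] m) v) \<le> Kw ^ n * fu v" .
  have "Kw ^ n < (\<gamma> ^ n) ^ n" using n Kw(1) npos by (intro power_strict_mono) auto
  then have "Kw ^ n < \<gamma> ^ m" by (simp add: m_def power_mult)
  then have "Kw ^ n * fu v < \<gamma> ^ m * fu v" using fupos[of v] by simp
  also have "\<dots> \<le> fu (\<phi> (t [^] m) v)" using grow by simp
  finally show False using up by simp
qed

end



theorem lemma6:
  fixes G :: "('g, 'm) monoid_scheme" and \<phi> :: "'g \<Rightarrow> 'a \<Rightarrow> 'a"
    and b :: "'a \<Rightarrow> 'a \<Rightarrow> real" and c :: "'a \<Rightarrow> real" and x0 :: 'a and R :: "'g set"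
  assumes "countable (UNIV :: 'a set)"
    and "graph b" and "graph_connected b"
    and "nilpotent_group G"
    and "group_action G UNIV \<phi>"
    and "cocompact G \<phi>"
    and "H_invariant G \<phi> b c"
    and "R \<lhd> G"
    and "q \<in> Qset G R"
    and "\<exists>g\<in>carrier G. \<exists>l\<in>carrier G. q = commutator G g l"
    and "f \<in> KsetR G \<phi> b c x0 R"
    and "harmonic b c f"
  shows "Tact G \<phi> q f = f"
proof -
  have grp: "group G" using assms(4) by (simp add: nilpotent_group_def)
  interpret L: lsetup G \<phi> b c R
    by (rule lsetup.intro) (use assms grp in auto)
  interpret NN: normal R G by (rule assms(8))
  have fK: "f \<in> Kset b c x0" and fT: "\<forall>r\<in>R. Tact G \<phi> r f = f"
    using assms(11) by (auto simp: KsetR_def)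
  have c1: "closed {F :: 'a \<Rightarrow> real. F x0 = 1}"
    by (rule closed_Collect_eq) (auto intro: continuous_on_product_coordinates)
  have c2: "closed {F :: 'a \<Rightarrow> real. \<forall>x. 0 \<le> F x}"
  proof -
    have "{F :: 'a \<Rightarrow> real. \<forall>x. 0 \<le> F x} = (\<Inter>x. {F. 0 \<le> F x})" by auto
    moreover have "closed {F :: 'a \<Rightarrow> real. 0 \<le> F x}" for x
      by (rule closed_Collect_le) (auto intro: continuous_on_product_coordinates)
    ultimately show ?thesis by (auto intro: closed_INT)
  qed
  have "Kset b c x0 \<subseteq> {F. F x0 = 1} \<inter> {F. \<forall>x. 0 \<le> F x}"
    unfolding Kset_def
    by (rule closure_minimal) (use c1 c2 in \<open>auto simp: Hplus_def\<close>)
  then have fx0: "f x0 = 1" and fnn: "\<And>x. 0 \<le> f x" using fK by auto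
  have fP: "f \<in> Pc b c" using assms(12) fnn by (simp add: Pc_def)
  have fpos: "0 < f x" for x
  proof -
    obtain C where C: "C \<ge> 0" "\<forall>F\<in>Pc b c. F x0 \<le> C * F x"
      using harnack[OF assms(2,3), where x=x and y=x0 and c=c] by blast
    have "1 \<le> C * f x" using C fP fx0 by force
    then show ?thesis using C(1) fnn[of x] by (cases "f x = 0") auto
  qed
  have fR: "L.Rinv f" unfolding L.Rinv_def
  proof (intro ballI allI)
    fix r y assume r: "r \<in> R"
    have ir: "inv\<^bsub>G\<^esub> r \<in> R" using r NN.m_inv_closed by simp
    have rG: "r \<in> carrier G" using r L.Rsub by auto
    have "Tact G \<phi> (inv\<^bsub>G\<^esub> r) f y = f y" using fT ir by simp
    then show "f (\<phi> r y) = f y" using rG by (simp add: Tact_def)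
  qed
  obtain g l where g: "g \<in> carrier G" and l: "l \<in> carrier G" and qc: "q = commutator G g l"
    using assms(10) by blast
  have qG: "q \<in> carrier G" using assms(9) by (simp add: Qset_def)
  have iq: "inv\<^bsub>G\<^esub> q = commutator G l g"
    using g l qc by (simp add: commutator_def L.inv_mult_group L.m_assoc)
  have iqQ: "inv\<^bsub>G\<^esub> q \<in> Qset G R"
  proof -
    interpret h: group_hom G "G Mod R" "\<lambda>a. R #>\<^bsub>G\<^esub> a"
      by (simp add: group_hom_def group_hom_axioms_def grp NN.factorgroup_is_group NN.r_coset_hom_Mod)
    interpret Q: group "G Mod R" by (rule NN.factorgroup_is_group)
    have cen: "R #>\<^bsub>G\<^esub> q \<in> group_center (G Mod R)" using assms(9) by (simp add: Qset_def)
    have cen': "\<forall>x\<in>carrier (G Mod R). (R #>\<^bsub>G\<^esub> q) \<otimes>\<^bsub>G Mod R\<^esub> x = x \<otimes>\<^bsub>G Mod R\<^esub> (R #>\<^bsub>G\<^esub> q)"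
      using cen by (simp add: group_center_def del: mult_FactGroup)
    have "R #>\<^bsub>G\<^esub> inv\<^bsub>G\<^esub> q = inv\<^bsub>G Mod R\<^esub> (R #>\<^bsub>G\<^esub> q)" using qG by simp
    moreover have "inv\<^bsub>G Mod R\<^esub> (R #>\<^bsub>G\<^esub> q) \<in> group_center (G Mod R)"
      using group.central_inv[OF NN.factorgroup_is_group _ cen'] qG unfolding group_center_def
      by (simp del: mult_FactGroup)
    ultimately show ?thesis using qG by (simp add: Qset_def)
  qed
  have le1: "f (\<phi> (inv\<^bsub>G\<^esub> q) x) \<le> f x" for x
    using L.main_claim[OF assms(6) fP fpos fR iqQ l g iq] .
  have le2: "f (\<phi> q x) \<le> f x" for x
    using L.main_claim[OF assms(6) fP fpos fR assms(9) g l qc] .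
  show ?thesis
  proof
    fix x
    have "f x = f (\<phi> q (\<phi> (inv\<^bsub>G\<^esub> q) x))"
      using qG by (simp add: L.comp[symmetric] L.one_act)
    also have "\<dots> \<le> f (\<phi> (inv\<^bsub>G\<^esub> q) x)" by (rule le2)
    finally show "Tact G \<phi> q f x = f x" using le1[of x] by (simp add: Tact_def)
  qed
qed


end
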